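(* Fix $t>1$ and let $(g_{n,t})_{n\ge0}$ be defined by $g_{0,t}=1$, $g_{n,t}=n\,g_{n-1,t}^{\,t}$ $(n\ge1)$, and let $\sigma_t=\prod_{n=1}^\infty n^{1/t^n}$. Then as $n\to\infty$, $$g_{n,t}=\sigma_t^{\,t^n}n^{-1/(t-1)}\left[1+\frac{t}{(1-t)^2n}-\frac{t(t^2-t-1)}{2(1-t)^4n^2}+\frac{t(2t^4+t^3-11t^2+7t+2)}{6(1-t)^6n^3}+O\!\left(\frac1{n^4}\right)\right]^{-1}.$$ *)

theory Defs
  imports "HOL-Analysis.Analysis" "HOL-Library.Landau_Symbols"
begin

fun gseq :: "real \<Rightarrow> nat \<Rightarrow> real" where
  "gseq t 0 = 1"
| "gseq t (Suc n) = real (Suc n) * (gseq t n) powr t"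

definition sigma :: "real \<Rightarrow> real" where
  "sigma t = (\<Prod>n. real (Suc n) powr (1 / t ^ Suc n))"

end

theory Submission imports Defs "HOL-Real_Asymp.Real_Asymp" begin


lemma summ_pow:
  fixes x :: real
  assumes "0 < x" "x < 1"
  shows "summable (\<lambda>j. real (j+1)^k * x^j)"
proof -
  have l1: "(\<lambda>j::nat. real (j+2) / real (j+1)) \<longlonglongrightarrow> 1" by real_asymp
  have "(\<lambda>j::nat. (real (j+2) / real (j+1))^k * x) \<longlonglongrightarrow> 1^k * x"
    by (intro tendsto_intros l1)
  then have "(\<lambda>j::nat. (real (j+2) / real (j+1))^k * x) \<longlonglongrightarrow> x" by simp
  moreover have "x < (1+x)/2" using assms by simp
  ultimately have "eventually (\<lambda>j. (real (j+2) / real (j+1))^k * x < (1+x)/2) sequentially"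
    by (rule order_tendstoD)
  then obtain N where N: "\<And>j. j \<ge> N \<Longrightarrow> (real (j+2) / real (j+1))^k * x < (1+x)/2"
    by (auto simp: eventually_sequentially)
  show ?thesis
  proof (rule summable_ratio_test[of "(1+x)/2" N])
    show "(1+x)/2 < 1" using assms by simp
    fix n assume "n \<ge> N"
    have "norm (real (Suc n + 1)^k * x^Suc n) = (real (n+2) / real (n+1))^k * x * (real (n+1)^k * x^n)"
      using assms by (simp add: power_divide field_simps)
    also have "\<dots> \<le> (1+x)/2 * (real (n+1)^k * x^n)"
      using N[OF \<open>n \<ge> N\<close>] assms by (intro mult_right_mono) auto
    also have "\<dots> = (1+x)/2 * norm (real (n+1)^k * x^n)" using assms by simp
    finally show "norm (real (Suc n + 1)^k * x^Suc n) \<le> (1+x)/2 * norm (real (n+1)^k * x^n)" .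
  qed
qed

lemma ln_bound:
  fixes y :: real assumes "y \<ge> 0"
  shows "\<bar>ln (1+y) - (y - y^2/2 + y^3/3)\<bar> \<le> y^4/4"
proof -
  define f where "f y = (y - y^2/2 + y^3/3) - ln (1+y)" for y :: real
  define g where "g y = ln (1+y) - (y - y^2/2 + y^3/3) + y^4/4" for y :: real
  have f0: "f 0 = 0" and g0: "g 0 = 0" by (simp_all add: f_def g_def)
  have fd: "(f has_real_derivative (y^3/(1+y))) (at y)" if "y \<ge> 0" for y
  proof -
    have "(f has_real_derivative (1 - y + y^2 - 1/(1+y))) (at y)"
      unfolding f_def using that
      by (auto intro!: derivative_eq_intros simp: power2_eq_square field_simps)
    moreover have "1 - y + y^2 - 1/(1+y) = y^3/(1+y)" using that
      by (simp add: field_simps power2_eq_square power3_eq_cube)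
    ultimately show ?thesis by simp
  qed
  have gd: "(g has_real_derivative (y^4/(1+y))) (at y)" if "y \<ge> 0" for y
  proof -
    have "(g has_real_derivative (1/(1+y) - (1 - y + y^2) + y^3)) (at y)"
      unfolding g_def using that
      by (auto intro!: derivative_eq_intros simp: power2_eq_square field_simps)
    moreover have "1/(1+y) - (1 - y + y^2) + y^3 = y^4/(1+y)" using that
      by (simp add: field_simps power2_eq_square power3_eq_cube power4_eq_xxxx)
    ultimately show ?thesis by simp
  qed
  have "f 0 \<le> f y"
  proof (rule DERIV_nonneg_imp_nondecreasing[OF assms])
    fix x :: real assume "0 \<le> x"
    then show "\<exists>d. (f has_real_derivative d) (at x) \<and> 0 \<le> d"
      by (intro exI[of _ "x^3/(1+x)"] conjI fd) auto
  qed
  moreover have "g 0 \<le> g y"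
  proof (rule DERIV_nonneg_imp_nondecreasing[OF assms])
    fix x :: real assume "0 \<le> x"
    then show "\<exists>d. (g has_real_derivative d) (at x) \<and> 0 \<le> d"
      by (intro exI[of _ "x^4/(1+x)"] conjI gd) auto
  qed
  ultimately show ?thesis using f0 g0 assms unfolding f_def g_def by auto
qed

lemma gseq_ln:
  fixes t :: real assumes "t > 1"
  shows "gseq t n > 0 \<and> ln (gseq t n) = t^n * (\<Sum>k<n. (1/t)^(k+1) * ln (real (k+1)))"
proof (induction n)
  case 0 then show ?case by simp
next
  case (Suc n)
  then have pos: "gseq t n > 0" and IH: "ln (gseq t n) = t^n * (\<Sum>k<n. (1/t)^(k+1) * ln (real (k+1)))" by auto
  have "ln (gseq t (Suc n)) = ln (real (Suc n)) + t * ln (gseq t n)"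
    using pos by (simp add: ln_mult ln_powr)
  also have "\<dots> = t^(Suc n) * (\<Sum>k<Suc n. (1/t)^(k+1) * ln (real (k+1)))"
    using assms by (simp add: IH algebra_simps power_divide)
  finally show ?case using pos by simp
qed

lemma exp_rem:
  fixes s :: real
  shows "\<bar>exp s - (1 + s + s^2/2 + s^3/6)\<bar> \<le> exp \<bar>s\<bar> * s^4 / 24"
proof -
  obtain z where z: "\<bar>z\<bar> \<le> \<bar>s\<bar>" "exp s = (\<Sum>m<4. s^m / fact m) + exp z / fact 4 * s^4"
    using Maclaurin_exp_le[of s 4] by blast
  have "(\<Sum>m<4. s^m / fact m) = 1 + s + s^2/2 + s^3/6"
    by (simp add: numeral_eq_Suc fact_numeral eval_nat_numeral)
  then have "exp s - (1 + s + s^2/2 + s^3/6) = exp z * s^4 / 24" using z by (simp add: fact_numeral)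
  moreover have "s^4 \<ge> 0" by (simp add: zero_le_even_power)
  moreover have "exp z \<le> exp \<bar>s\<bar>" using z by simp
  moreover have "exp z * s^4 / 24 \<le> exp \<bar>s\<bar> * s^4 / 24"
    using calculation by (intro divide_right_mono mult_right_mono) auto
  ultimately show ?thesis by (metis abs_of_nonneg divide_nonneg_nonneg exp_ge_zero mult_nonneg_nonneg zero_le_numeral)
qed

lemma shift_step:
  fixes x :: real
  assumes "(\<lambda>j. real (j+2)^k * x^(j+1)) sums S"
  shows "(\<lambda>j. real (j+1)^k * x^(j+1)) sums (x * (S + 1))"
proof -
  have "(\<lambda>j. real (Suc j + 1)^k * x^(Suc j)) sums S" using assms by (simp add: add.commute)
  then have "(\<lambda>j. real (j + 1)^k * x^j) sums (S + 1)"
    using sums_Suc_iff[of "\<lambda>j. real (j + 1)^k * x^j" S] by simp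
  from sums_mult[OF this, of x] show ?thesis by (simp add: algebra_simps)
qed

lemma solve_lin:
  fixes a b x :: real
  assumes "a = x * (a + b)" "x \<noteq> 1"
  shows "a = x * b / (1 - x)"
proof -
  have "a * (1 - x) = x * b" using assms(1) by algebra
  moreover have "1 - x \<noteq> 0" using assms(2) by simp
  ultimately show ?thesis by (simp add: eq_divide_eq)
qed

lemma moments:
  fixes t :: real assumes t: "t > 1"
  defines "x \<equiv> 1/t"
  shows "(\<lambda>j. x^(j+1)) sums (1/(t-1))"
    and "(\<lambda>j. real (j+1) * x^(j+1)) sums (t/(t-1)^2)"
    and "(\<lambda>j. real (j+1)^2 * x^(j+1)) sums (t*(t+1)/(t-1)^3)"
    and "(\<lambda>j. real (j+1)^3 * x^(j+1)) sums (t*(t^2+4*t+1)/(t-1)^4)"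
    and "summable (\<lambda>j. real (j+1)^4 * x^(j+1))"
proof -
  have x0: "0 < x" "x < 1" using t by (auto simp: x_def)
  have sm: "summable (\<lambda>j. real (j+1)^k * x^(j+1))" for k
    using summable_mult2[OF summ_pow[OF x0, of k], of x] by (simp add: algebra_simps)
  define s where "s k = (\<Sum>j. real (j+1)^k * x^(j+1))" for k
  have ss: "(\<lambda>j. real (j+1)^k * x^(j+1)) sums s k" for k
    unfolding s_def using sm by (rule summable_sums)
  have s0: "(\<lambda>j. x^(j+1)) sums s 0" using ss[of 0] by simp
  have s1: "(\<lambda>j. real (j+1) * x^(j+1)) sums s 1" using ss[of 1] by simp
  have "(\<lambda>j. x^(j+1)) sums (x * (1 / (1 - x)))"
    using sums_mult[OF geometric_sums[of x], of x] x0 by simp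
  then have e0: "s 0 = x / (1 - x)" using sums_unique2[OF s0] by simp
  have r2: "real (j+2) = real (j+1) + 1" for j by simp
  have q1: "(\<lambda>j. real (j+2)^1 * x^(j+1)) = (\<lambda>j. real (j+1) * x^(j+1) + x^(j+1))"
    by (rule ext) (simp only: r2 power_one_right distrib_right mult_1_left)
  have "(\<lambda>j. real (j+2)^1 * x^(j+1)) sums (s 1 + s 0)"
    unfolding q1 by (rule sums_add[OF s1 s0])
  from shift_step[OF this] have "(\<lambda>j. real (j+1) * x^(j+1)) sums (x * ((s 1 + s 0) + 1))" by simp
  then have e1: "s 1 = x * ((s 1 + s 0) + 1)" by (rule sums_unique2[OF s1])
  have "(\<lambda>j. real (j+2)^2 * x^(j+1)) sums (s 2 + 2 * s 1 + s 0)"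
  proof -
    have q: "(\<lambda>j. real (j+2)^2 * x^(j+1)) = (\<lambda>j. real (j+1)^2 * x^(j+1) + 2 * (real (j+1) * x^(j+1)) + x^(j+1))"
      by (rule ext) (simp only: r2, simp add: power2_eq_square algebra_simps)
    show ?thesis unfolding q by (rule sums_add[OF sums_add[OF ss[of 2] sums_mult[OF s1, of 2]] s0])
  qed
  from shift_step[OF this] have e2: "s 2 = x * ((s 2 + 2 * s 1 + s 0) + 1)" by (rule sums_unique2[OF ss[of 2]])
  have "(\<lambda>j. real (j+2)^3 * x^(j+1)) sums (s 3 + 3 * s 2 + 3 * s 1 + s 0)"
  proof -
    have q: "(\<lambda>j. real (j+2)^3 * x^(j+1)) = (\<lambda>j. real (j+1)^3 * x^(j+1) + 3 * (real (j+1)^2 * x^(j+1)) + 3 * (real (j+1) * x^(j+1)) + x^(j+1))"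
      by (rule ext) (simp only: r2, simp add: power2_eq_square power3_eq_cube algebra_simps)
    show ?thesis unfolding q by (rule sums_add[OF sums_add[OF sums_add[OF ss[of 3] sums_mult[OF ss[of 2], of 3]] sums_mult[OF s1, of 3]] s0])
  qed
  from shift_step[OF this] have e3: "s 3 = x * ((s 3 + 3 * s 2 + 3 * s 1 + s 0) + 1)" by (rule sums_unique2[OF ss[of 3]])
  have tx: "t * x = 1" using t by (simp add: x_def)
  define d where "d = t - 1"
  have d0: "d > 0" using t by (simp add: d_def)
  have td: "t = d + 1" by (simp add: d_def)
  have xt: "x = 1/(d+1)" by (simp add: x_def td)
  have omx: "1 - x = d/(d+1)" using d0 by (simp add: xt field_simps)
  have nz: "d \<noteq> 0" "d + 1 \<noteq> 0" using d0 by auto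
  have hx: "1 - x = x * d" by (subst omx) (simp add: xt)
  have xo: "x * a / (1 - x) = a / d" for a unfolding hx using x0 by simp
  have v0: "s 0 = 1/d" unfolding e0 xt omx using nz by (simp add: field_simps)
  have w1: "s 1 = x * (s 0 + 1) / (1 - x)"
    using solve_lin[of "s 1" x "s 0 + 1"] e1 x0 by (simp add: algebra_simps)
  have v1: "s 1 = (d+1)/d^2"
    unfolding w1 xo v0 using nz by (simp add: field_simps; algebra)
  have w2: "s 2 = x * (2 * s 1 + s 0 + 1) / (1 - x)"
    using solve_lin[of "s 2" x "2 * s 1 + s 0 + 1"] e2 x0 by (simp add: algebra_simps)
  have v2: "s 2 = (d+1)*(d+2)/d^3"
    unfolding w2 xo v0 v1 using nz by (simp add: field_simps; algebra)
  have w3: "s 3 = x * (3 * s 2 + 3 * s 1 + s 0 + 1) / (1 - x)"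
    using solve_lin[of "s 3" x "3 * s 2 + 3 * s 1 + s 0 + 1"] e3 x0 by (simp add: algebra_simps)
  have v3: "s 3 = (d+1)*(d^2+6*d+6)/d^4"
    unfolding w3 xo v0 v1 v2 using nz by (simp add: field_simps; algebra)
  have e: "t - 1 = d" "t = d + 1" "t*(t+1) = (d+1)*(d+2)" "t*(t^2+4*t+1) = (d+1)*(d^2+6*d+6)"
    by (simp_all add: td algebra_simps power2_eq_square)
  have v0: "s 0 = 1/(t-1)" by (simp only: v0 e(1))
  have v1: "s 1 = t/(t-1)^2" by (simp only: v1 e(1)) (simp add: td)
  have v2: "s 2 = t*(t+1)/(t-1)^3" by (simp only: v2 e(1) e(3))
  have v3: "s 3 = t*(t^2+4*t+1)/(t-1)^4" by (simp only: v3 e(1) e(4))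
  show "(\<lambda>j. x^(j+1)) sums (1/(t-1))" using s0 v0 by simp
  show "(\<lambda>j. real (j+1) * x^(j+1)) sums (t/(t-1)^2)" using s1 v1 by simp
  show "(\<lambda>j. real (j+1)^2 * x^(j+1)) sums (t*(t+1)/(t-1)^3)" using ss[of 2] v2 by simp
  show "(\<lambda>j. real (j+1)^3 * x^(j+1)) sums (t*(t^2+4*t+1)/(t-1)^4)" using ss[of 3] v3 by simp
  show "summable (\<lambda>j. real (j+1)^4 * x^(j+1))" by (rule sm)
qed



lemma sums_abs_le:
  fixes g h :: "nat \<Rightarrow> real"
  assumes "g sums R" "h sums H" "\<And>j. \<bar>g j\<bar> \<le> h j"
  shows "\<bar>R\<bar> \<le> H"
proof -
  have sh: "summable h" using assms(2) by (rule sums_summable)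
  have sa: "summable (\<lambda>j. \<bar>g j\<bar>)"
    by (rule summable_rabs_comparison_test[OF _ sh]) (use assms(3) in auto)
  have "\<bar>R\<bar> = \<bar>suminf g\<bar>" using assms(1) by (simp add: sums_iff)
  also have "\<dots> \<le> (\<Sum>j. \<bar>g j\<bar>)" by (rule summable_rabs[OF sa])
  also have "\<dots> \<le> suminf h" by (rule suminf_le[OF assms(3) sa sh])
  also have "\<dots> = H" using assms(2) by (simp add: sums_iff)
  finally show ?thesis .
qed

lemma sq_le: fixes a B :: real assumes "\<bar>a\<bar> \<le> B" shows "a^2 \<le> B^2"
proof -
  have "\<bar>a\<bar>^2 \<le> B^2" by (rule power_mono[OF assms]) simp
  then show ?thesis by simp
qed

lemma prod_le: fixes a b A B :: real assumes "\<bar>a\<bar> \<le> A" "\<bar>b\<bar> \<le> B" shows "\<bar>a*b\<bar> \<le> A*B"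
  unfolding abs_mult using assms by (intro mult_mono) auto

lemma abs3: fixes x y z :: real shows "\<bar>x+y+z\<bar> \<le> \<bar>x\<bar>+\<bar>y\<bar>+\<bar>z\<bar>" by arith

lemma T_factor_bound:
  fixes a b B :: real
  assumes "\<bar>a\<bar> \<le> B" "\<bar>b\<bar> \<le> B"
  shows "\<bar>1 + (a+b)/2 + (a^2 + a*b + b^2)/6\<bar> \<le> 1 + B + B^2/2"
proof -
  have "a^2 \<le> B^2" "b^2 \<le> B^2" using sq_le assms by auto
  moreover have "\<bar>a*b\<bar> \<le> B*B" using prod_le assms by blast
  moreover have "a^2 \<ge> 0" "b^2 \<ge> 0" by auto
  ultimately have "\<bar>a^2 + a*b + b^2\<bar> \<le> 3 * B^2"
    using abs3[of "a^2" "a*b" "b^2"] by (simp add: power2_eq_square)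
  then have "\<bar>(a^2 + a*b + b^2)/6\<bar> \<le> B^2/2" by simp
  moreover have "\<bar>(a+b)/2\<bar> \<le> B" using assms by simp
  ultimately show ?thesis using abs3[of 1 "(a+b)/2" "(a^2 + a*b + b^2)/6"] by simp
qed

lemma H_bound:
  fixes a1 a2 a3 u :: real
  assumes u: "0 \<le> u" "u \<le> 1"
  defines "q \<equiv> a1 + a2*u + a3*u^2"
  shows "\<bar>(a2^2 + 2*a1*a3 + 2*a2*a3*u + a3^2*u^2)/2 + (a2 + a3*u)*(q^2 + q*a1 + a1^2)/6\<bar>
     \<le> (\<bar>a1\<bar>+\<bar>a2\<bar>+\<bar>a3\<bar>)^2 + (\<bar>a1\<bar>+\<bar>a2\<bar>+\<bar>a3\<bar>)^3"
proof -
  define A where "A = \<bar>a1\<bar>+\<bar>a2\<bar>+\<bar>a3\<bar>"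
  have A0: "A \<ge> 0" by (simp add: A_def)
  have u2: "0 \<le> u^2" "u^2 \<le> 1" using u by (auto simp: power_le_one)
  have b2: "\<bar>a2*u\<bar> \<le> \<bar>a2\<bar>" using u by (simp add: abs_mult mult_left_le)
  have b3: "\<bar>a3*u\<bar> \<le> \<bar>a3\<bar>" using u by (simp add: abs_mult mult_left_le)
  have b3': "\<bar>a3*u^2\<bar> \<le> \<bar>a3\<bar>" using u2 by (simp add: abs_mult mult_left_le)
  have qA: "\<bar>q\<bar> \<le> A" unfolding q_def A_def using b2 b3' by linarith
  have a1A: "\<bar>a1\<bar> \<le> A" unfolding A_def by simp
  have lA: "\<bar>a2 + a3*u\<bar> \<le> A" unfolding A_def using b3 by linarith
  have "\<bar>q^2 + q*a1 + a1^2\<bar> \<le> 3 * A^2"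
  proof -
    have "q^2 \<le> A^2" "a1^2 \<le> A^2" using sq_le qA a1A by auto
    moreover have "\<bar>q*a1\<bar> \<le> A*A" using prod_le qA a1A by blast
    ultimately show ?thesis
      using abs3[of "q^2" "q*a1" "a1^2"] by (simp add: power2_eq_square)
  qed
  then have h2: "\<bar>(a2 + a3*u)*(q^2 + q*a1 + a1^2)\<bar> \<le> A * (3 * A^2)" using prod_le lA by blast
  have "\<bar>a2^2 + 2*a1*a3 + 2*a2*a3*u + a3^2*u^2\<bar> \<le> \<bar>a2\<bar>^2 + 2*\<bar>a1\<bar>*\<bar>a3\<bar> + 2*\<bar>a2\<bar>*\<bar>a3\<bar> + \<bar>a3\<bar>^2"
  proof -
    have "\<bar>2*a2*a3*u\<bar> \<le> 2*\<bar>a2\<bar>*\<bar>a3\<bar>" using b3 by (simp add: abs_mult mult_left_mono)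
    moreover have "\<bar>a3^2*u^2\<bar> \<le> \<bar>a3\<bar>^2" using u2 by (simp add: abs_mult mult_left_le)
    moreover have "\<bar>2*a1*a3\<bar> = 2*\<bar>a1\<bar>*\<bar>a3\<bar>" by (simp add: abs_mult)
    moreover have "\<bar>a2^2\<bar> = \<bar>a2\<bar>^2" by simp
    ultimately show ?thesis by linarith
  qed
  also have "\<dots> \<le> A^2" unfolding A_def by (simp add: power2_eq_square algebra_simps)
  finally have h1: "\<bar>a2^2 + 2*a1*a3 + 2*a2*a3*u + a3^2*u^2\<bar> \<le> A^2" .
  have "A^2/2 + A*(3*A^2)/6 \<le> A^2 + A^3"
  proof -
    have "A^2 \<ge> 0" "A^3 \<ge> 0" using A0 by auto
    moreover have "A*(3*A^2)/6 = A^3/2" by (simp add: power2_eq_square power3_eq_cube)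
    ultimately show ?thesis by linarith
  qed
  moreover have "\<bar>X/2 + Y/6\<bar> \<le> \<bar>X\<bar>/2 + \<bar>Y\<bar>/6" for X Y :: real by arith
  ultimately show ?thesis using h1 h2 unfolding A_def[symmetric]
    by (smt (verit) divide_right_mono zero_le_numeral)
qed



lemma coeffs:
  fixes d t :: real
  assumes "d > 0" "t = d + 1"
  shows "t/(1-t)^2 = t/(t-1)^2"
    and "-(t*(t^2-t-1)/(2*(1-t)^4)) = -(t*(t+1)/(t-1)^3)/2 + (t/(t-1)^2)^2/2"
    and "t*(2*t^4+t^3-11*t^2+7*t+2)/(6*(1-t)^6) =
         (t*(t^2+4*t+1)/(t-1)^4)/3 + (t/(t-1)^2)*(-(t*(t+1)/(t-1)^3)/2) + (t/(t-1)^2)^3/6"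
proof -
  have e: "1 - t = -d" "t - 1 = d" using assms by auto
  have nz: "d \<noteq> 0" using assms by auto
  show "t/(1-t)^2 = t/(t-1)^2" unfolding e by simp
  show "-(t*(t^2-t-1)/(2*(1-t)^4)) = -(t*(t+1)/(t-1)^3)/2 + (t/(t-1)^2)^2/2"
    unfolding e using nz by (simp add: assms(2) field_simps eval_nat_numeral)
  show "t*(2*t^4+t^3-11*t^2+7*t+2)/(6*(1-t)^6) =
         (t*(t^2+4*t+1)/(t-1)^4)/3 + (t/(t-1)^2)*(-(t*(t+1)/(t-1)^3)/2) + (t/(t-1)^2)^3/6"
    unfolding e using nz by (simp add: assms(2) field_simps eval_nat_numeral)
qed

lemma poly_id:
  fixes a1 a2 a3 u :: real
  defines "Q \<equiv> a1*u + a2*u^2 + a3*u^3"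
  defines "q \<equiv> a1 + a2*u + a3*u^2"
  shows "1 + Q + Q^2/2 + Q^3/6 - (1 + a1*u + (a2 + a1^2/2)*u^2 + (a3 + a1*a2 + a1^3/6)*u^3)
     = u^4 * ((a2^2 + 2*a1*a3 + 2*a2*a3*u + a3^2*u^2)/2 + (a2 + a3*u)*(q^2 + q*a1 + a1^2)/6)"
  unfolding Q_def q_def by (simp add: field_simps eval_nat_numeral)



theorem theorem22:
  fixes t :: real
  assumes "t > 1"
  shows "(\<lambda>n::nat. (sigma t powr (t ^ n) * real n powr (-1 / (t - 1))) / gseq t n
            - (1 + t / ((1 - t)^2 * real n)
                 - t * (t^2 - t - 1) / (2 * (1 - t)^4 * (real n)^2)
                 + t * (2 * t^4 + t^3 - 11 * t^2 + 7 * t + 2) / (6 * (1 - t)^6 * (real n)^3)))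
         \<in> O(\<lambda>n. 1 / (real n)^4)"
proof -
  have t: "t > 1" by (rule assms)
  define x where "x = 1/t"
  have x0: "0 < x" "x < 1" using t by (auto simp: x_def)
  have tx: "t * x = 1" using t by (simp add: x_def)
  define c1 where "c1 = t/(t-1)^2"
  define c2 where "c2 = t*(t+1)/(t-1)^3"
  define c3 where "c3 = t*(t^2+4*t+1)/(t-1)^4"
  define C4 where "C4 = (\<Sum>j. real (j+1)^4 * x^(j+1))"
  have m0: "(\<lambda>j. x^(j+1)) sums (1/(t-1))" using moments(1)[OF t] by (simp add: x_def)
  have m1: "(\<lambda>j. real (j+1) * x^(j+1)) sums c1" using moments(2)[OF t] by (simp add: x_def c1_def)
  have m2: "(\<lambda>j. real (j+1)^2 * x^(j+1)) sums c2" using moments(3)[OF t] by (simp add: x_def c2_def)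
  have m3: "(\<lambda>j. real (j+1)^3 * x^(j+1)) sums c3" using moments(4)[OF t] by (simp add: x_def c3_def)
  have m4: "(\<lambda>j. real (j+1)^4 * x^(j+1)) sums C4"
    unfolding C4_def by (rule summable_sums) (use moments(5)[OF t] in \<open>simp add: x_def\<close>)
  have cpos: "c1 > 0" "c2 > 0" using t by (simp_all add: c1_def c2_def)
  have c3pos: "c3 > 0" unfolding c3_def using t by (intro divide_pos_pos mult_pos_pos add_pos_pos) auto
  have C4nn: "C4 \<ge> 0" by (rule sums_le[OF _ sums_zero m4]) (use x0 in simp)

  define f where "f k = x^(k+1) * ln (real (k+1))" for k
  have f_summ: "summable f"
  proof (rule summable_comparison_test'[OF sums_summable[OF m1], of 0])
    fix k :: nat
    have "ln (real (k+1)) \<le> real (k+1)" using ln_le_minus_one[of "real (k+1)"] by simp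
    moreover have "ln (real (k+1)) \<ge> 0" by simp
    ultimately show "norm (f k) \<le> real (k+1) * x^(k+1)"
      using x0 by (simp add: f_def abs_mult mult_right_mono mult.commute)
  qed
  define L where "L = suminf f"
  have fL: "f sums L" using f_summ unfolding L_def by (rule summable_sums)
  have sig: "sigma t = exp L"
  proof -
    have "(\<lambda>n. real (Suc n) powr (1 / t ^ Suc n)) = (\<lambda>n. exp (f n))"
      by (rule ext) (simp add: powr_def f_def x_def power_one_over mult.commute)
    then show ?thesis unfolding sigma_def L_def using prodinf_exp[OF f_summ] by simp
  qed

  have key: "(\<lambda>j. x^(j+1) * ln (1 + real (j+1) / real n)) sums (t^n * (L - (\<Sum>k<n. f k)) - ln (real n) / (t-1))"
    if n1: "n \<ge> 1" for n
  proof -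
    have A: "(\<lambda>j. f (j+n)) sums (L - (\<Sum>k<n. f k))" by (rule sums_split_initial_segment[OF fL])
    have B: "(\<lambda>j. x^(j+1) * ln (real (j+n+1))) sums (t^n * (L - (\<Sum>k<n. f k)))"
    proof -
      have "(\<lambda>j. t^n * f (j+n)) = (\<lambda>j. x^(j+1) * ln (real (j+n+1)))"
      proof (rule ext)
        fix j
        have "t^n * x^(j+n+1) = (t*x)^n * x^(j+1)" by (simp add: power_add power_mult_distrib algebra_simps)
        then have "t^n * x^(j+n+1) = x^(j+1)" using tx by simp
        then show "t^n * f (j+n) = x^(j+1) * ln (real (j+n+1))" by (simp add: f_def mult.assoc[symmetric])
      qed
      with sums_mult[OF A, of "t^n"] show ?thesis by simp
    qed
    have C: "(\<lambda>j. x^(j+1) * ln (real n)) sums (ln (real n) / (t-1))"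
      using sums_mult2[OF m0, of "ln (real n)"] by simp
    have "(\<lambda>j. x^(j+1) * ln (real (j+n+1)) - x^(j+1) * ln (real n)) = (\<lambda>j. x^(j+1) * ln (1 + real (j+1) / real n))"
    proof (rule ext)
      fix j
      have "ln (real (j+n+1)) - ln (real n) = ln (real (j+n+1) / real n)" using n1 by (simp add: ln_div)
      also have "real (j+n+1) / real n = 1 + real (j+1) / real n" using n1 by (simp add: field_simps)
      finally show "x^(j+1) * ln (real (j+n+1)) - x^(j+1) * ln (real n) = x^(j+1) * ln (1 + real (j+1) / real n)"
        by (simp add: right_diff_distrib[symmetric])
    qed
    with sums_diff[OF B C] show ?thesis by simp
  qed
  define S where "S n = (\<Sum>j. x^(j+1) * ln (1 + real (j+1) / real n))" for n
  have Ssums: "(\<lambda>j. x^(j+1) * ln (1 + real (j+1) / real n)) sums S n" if "n \<ge> 1" for n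
    unfolding S_def by (rule summable_sums, rule sums_summable[OF key[OF that]])
  have ratio: "(sigma t powr (t^n) * real n powr (-1/(t-1))) / gseq t n = exp (S n)" if n1: "n \<ge> 1" for n
  proof -
    have Sn: "S n = t^n * (L - (\<Sum>k<n. f k)) - ln (real n) / (t-1)"
      using sums_unique2[OF Ssums[OF n1] key[OF n1]] .
    have gp: "gseq t n > 0" and gl: "ln (gseq t n) = t^n * (\<Sum>k<n. f k)"
      using gseq_ln[OF t, of n] by (simp_all add: f_def x_def)
    have "sigma t powr (t^n) = exp (t^n * L)" by (simp add: sig powr_def)
    moreover have "real n powr (-1/(t-1)) = exp (-1/(t-1) * ln (real n))" using n1 by (simp add: powr_def)
    moreover have "gseq t n = exp (t^n * (\<Sum>k<n. f k))" using gp gl by (metis exp_ln)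
    ultimately have "(sigma t powr (t^n) * real n powr (-1/(t-1))) / gseq t n
        = exp (t^n * L) * exp (-1/(t-1) * ln (real n)) / exp (t^n * (\<Sum>k<n. f k))" by simp
    also have "\<dots> = exp (t^n*L + (-1/(t-1) * ln (real n)) - t^n * (\<Sum>k<n. f k))" by (simp only: exp_add exp_diff)
    also have "\<dots> = exp (S n)" unfolding Sn by (simp add: algebra_simps)
    finally show ?thesis .
  qed

  define Q where "Q n = c1 * (1/real n) - c2/2 * (1/real n)^2 + c3/3 * (1/real n)^3" for n
  have Sprops: "\<bar>S n - Q n\<bar> \<le> C4/4 * (1/real n)^4 \<and> 0 \<le> S n \<and> S n \<le> c1 * (1/real n)" if n1: "n \<ge> 1" for n
  proof -
    define u where "u = 1 / real n"
    have u: "0 < u" "u \<le> 1" using n1 by (auto simp: u_def)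
    have yu: "real (j+1) / real n = real (j+1) * u" for j by (simp add: u_def)
    have Ss: "(\<lambda>j. x^(j+1) * ln (1 + real (j+1) * u)) sums S n" using Ssums[OF n1] by (simp only: yu)
    have Qs: "(\<lambda>j. x^(j+1) * (real (j+1) * u - (real (j+1) * u)^2/2 + (real (j+1) * u)^3/3)) sums Q n"
    proof -
      have "(\<lambda>j. u * (real (j+1) * x^(j+1)) - u^2/2 * (real (j+1)^2 * x^(j+1)) + u^3/3 * (real (j+1)^3 * x^(j+1)))
          sums (u * c1 - u^2/2 * c2 + u^3/3 * c3)"
        by (intro sums_add sums_diff sums_mult m1 m2 m3)
      moreover have "(\<lambda>j. u * (real (j+1) * x^(j+1)) - u^2/2 * (real (j+1)^2 * x^(j+1)) + u^3/3 * (real (j+1)^3 * x^(j+1)))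
          = (\<lambda>j. x^(j+1) * (real (j+1) * u - (real (j+1) * u)^2/2 + (real (j+1) * u)^3/3))"
        by (rule ext) (simp only: power_mult_distrib, simp add: algebra_simps)
      moreover have "u * c1 - u^2/2 * c2 + u^3/3 * c3 = Q n" by (simp add: Q_def u_def algebra_simps)
      ultimately show ?thesis by simp
    qed
    have Rs: "(\<lambda>j. x^(j+1) * ln (1 + real (j+1) * u) - x^(j+1) * (real (j+1) * u - (real (j+1) * u)^2/2 + (real (j+1) * u)^3/3)) sums (S n - Q n)"
      by (rule sums_diff[OF Ss Qs])
    have R4: "(\<lambda>j. u^4/4 * (real (j+1)^4 * x^(j+1))) sums (u^4/4 * C4)" by (rule sums_mult[OF m4])
    have "\<bar>S n - Q n\<bar> \<le> u^4/4 * C4"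
    proof (rule sums_abs_le[OF Rs R4])
      fix j
      define y where "y = real (j+1) * u"
      have y0: "y \<ge> 0" using u by (simp add: y_def)
      have "\<bar>x^(j+1) * ln (1 + y) - x^(j+1) * (y - y^2/2 + y^3/3)\<bar> = x^(j+1) * \<bar>ln (1 + y) - (y - y^2/2 + y^3/3)\<bar>"
        using x0 by (simp add: right_diff_distrib[symmetric] abs_mult)
      also have "\<dots> \<le> x^(j+1) * (y^4/4)" using ln_bound[OF y0] x0 by (intro mult_left_mono) auto
      also have "\<dots> = u^4/4 * (real (j+1)^4 * x^(j+1))" by (simp add: y_def power_mult_distrib)
      finally show "\<bar>x^(j+1) * ln (1 + real (j+1) * u) - x^(j+1) * (real (j+1) * u - (real (j+1) * u)^2/2 + (real (j+1) * u)^3/3)\<bar>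
          \<le> u^4/4 * (real (j+1)^4 * x^(j+1))" by (simp add: y_def)
    qed
    moreover have "0 \<le> S n"
      by (rule sums_le[OF _ sums_zero Ss]) (use x0 u in simp)
    moreover have "S n \<le> u * c1"
    proof (rule sums_le[OF _ Ss sums_mult[OF m1, of u]])
      fix j
      have "ln (1 + real (j+1) * u) \<le> real (j+1) * u" by (rule ln_add_one_self_le_self) (use u in simp)
      then have "x^(j+1) * ln (1 + real (j+1) * u) \<le> x^(j+1) * (real (j+1) * u)"
        using x0 by (intro mult_left_mono) auto
      also have "\<dots> = u * (real (j+1) * x^(j+1))" by (simp only: mult_ac)
      finally show "x^(j+1) * ln (1 + real (j+1) * u) \<le> u * (real (j+1) * x^(j+1))" .
    qed
    ultimately show ?thesis by (simp add: u_def algebra_simps)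
  qed

  define a1 where "a1 = c1"
  define a2 where "a2 = -c2/2"
  define a3 where "a3 = c3/3"
  define B where "B = c1 + c2/2 + c3/3"
  define A where "A = \<bar>a1\<bar> + \<bar>a2\<bar> + \<bar>a3\<bar>"
  define K where "K = exp B * c1^4/24 + C4/4 * (1 + B + B^2/2) + (A^2 + A^3)"
  have cf: "t/(1-t)^2 = a1" "-(t*(t^2-t-1)/(2*(1-t)^4)) = a2 + a1^2/2"
       "t*(2*t^4+t^3-11*t^2+7*t+2)/(6*(1-t)^6) = a3 + a1*a2 + a1^3/6"
    using coeffs[of "t-1" t] t by (simp_all add: a1_def a2_def a3_def c1_def c2_def c3_def)
  show ?thesis
  proof (rule bigoI[where c = K])
    show "eventually (\<lambda>n. norm ((sigma t powr (t ^ n) * real n powr (-1 / (t - 1))) / gseq t n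
            - (1 + t / ((1 - t)^2 * real n)
                 - t * (t^2 - t - 1) / (2 * (1 - t)^4 * (real n)^2)
                 + t * (2 * t^4 + t^3 - 11 * t^2 + 7 * t + 2) / (6 * (1 - t)^6 * (real n)^3)))
          \<le> K * norm (1 / (real n)^4)) at_top"
      using eventually_ge_at_top[of "1::nat"]
    proof eventually_elim
      case (elim n)
      define u where "u = 1 / real n"
      have u: "0 < u" "u \<le> 1" using elim by (auto simp: u_def)
      have nu: "norm (1 / (real n)^4) = u^4" by (simp add: u_def power_one_over)
      have P: "1 + t / ((1 - t)^2 * real n)
                 - t * (t^2 - t - 1) / (2 * (1 - t)^4 * (real n)^2)
                 + t * (2 * t^4 + t^3 - 11 * t^2 + 7 * t + 2) / (6 * (1 - t)^6 * (real n)^3)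
             = 1 + a1*u + (a2 + a1^2/2)*u^2 + (a3 + a1*a2 + a1^3/6)*u^3"
      proof -
        have h1: "t / ((1 - t)^2 * real n) = a1 * u" unfolding cf(1)[symmetric] by (simp add: u_def)
        have h2: "t * (t^2 - t - 1) / (2 * (1 - t)^4 * (real n)^2) = -(a2 + a1^2/2) * u^2"
          unfolding cf(2)[symmetric] by (simp add: u_def power_one_over)
        have h3: "t * (2 * t^4 + t^3 - 11 * t^2 + 7 * t + 2) / (6 * (1 - t)^6 * (real n)^3)
            = (a3 + a1*a2 + a1^3/6) * u^3"
          unfolding cf(3)[symmetric] by (simp add: u_def power_one_over)
        show ?thesis unfolding h1 h2 h3 by (simp add: algebra_simps)
      qed
      have rat: "(sigma t powr (t^n) * real n powr (-1/(t-1))) / gseq t n = exp (S n)" by (rule ratio[OF elim])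
      define s where "s = S n"
      define q where "q = Q n"
      have sp: "\<bar>s - q\<bar> \<le> C4/4 * u^4" "0 \<le> s" "s \<le> c1 * u"
        using Sprops[OF elim] by (simp_all add: s_def q_def u_def)
      have qdef: "q = a1*u + a2*u^2 + a3*u^3" by (simp add: q_def Q_def a1_def a2_def a3_def u_def)
      have u2: "u^2 \<le> 1" "u^3 \<le> 1" "u^2 \<ge> 0" "u^3 \<ge> 0" using u by (auto simp: power_le_one)
      have c1u: "c1 * u \<le> c1" using u cpos by (simp add: mult_left_le)
      have "s \<le> B" using sp(3) c1u cpos c3pos unfolding B_def by linarith
      then have sB: "\<bar>s\<bar> \<le> B" using sp(2) by simp
      have qB: "\<bar>q\<bar> \<le> B"
      proof -
        have "\<bar>q\<bar> \<le> c1 * u + c2/2 * u^2 + c3/3 * u^3" unfolding qdef a1_def a2_def a3_def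
          using u cpos c3pos by (simp add: abs_if)
        moreover have "c2/2 * u^2 \<le> c2/2" "c3/3 * u^3 \<le> c3/3" using u2 cpos c3pos by (simp_all add: mult_left_le)
        ultimately show ?thesis using c1u by (simp add: B_def)
      qed
      define T where "T z = 1 + z + z^2/2 + z^3/6" for z :: real
      have E1: "\<bar>exp s - T s\<bar> \<le> exp B * c1^4/24 * u^4"
      proof -
        have "\<bar>exp s - T s\<bar> \<le> exp \<bar>s\<bar> * s^4/24" unfolding T_def by (rule exp_rem)
        also have "\<dots> \<le> exp B * (c1*u)^4/24"
        proof -
          have "s^4 \<le> (c1*u)^4" using sp by (intro power_mono) auto
          moreover have "exp \<bar>s\<bar> \<le> exp B" using sB by simp
          ultimately show ?thesis by (intro divide_right_mono mult_mono) auto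
        qed
        also have "\<dots> = exp B * c1^4/24 * u^4" by (simp add: power_mult_distrib)
        finally show ?thesis .
      qed
      have E2: "\<bar>T s - T q\<bar> \<le> C4/4 * (1 + B + B^2/2) * u^4"
      proof -
        have "T s - T q = (s - q) * (1 + (s+q)/2 + (s^2 + s*q + q^2)/6)"
          unfolding T_def by (simp add: field_simps eval_nat_numeral)
        then have "\<bar>T s - T q\<bar> \<le> (C4/4 * u^4) * (1 + B + B^2/2)"
          using prod_le[OF sp(1) T_factor_bound[OF sB qB]] by simp
        then show ?thesis by (simp add: algebra_simps)
      qed
      have E3: "\<bar>T q - (1 + a1*u + (a2 + a1^2/2)*u^2 + (a3 + a1*a2 + a1^3/6)*u^3)\<bar> \<le> (A^2 + A^3) * u^4"
      proof -
        have "T q - (1 + a1*u + (a2 + a1^2/2)*u^2 + (a3 + a1*a2 + a1^3/6)*u^3)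
          = u^4 * ((a2^2 + 2*a1*a3 + 2*a2*a3*u + a3^2*u^2)/2 + (a2 + a3*u)*((a1 + a2*u + a3*u^2)^2 + (a1 + a2*u + a3*u^2)*a1 + a1^2)/6)"
          unfolding T_def qdef by (rule poly_id)
        moreover have "\<bar>(a2^2 + 2*a1*a3 + 2*a2*a3*u + a3^2*u^2)/2 + (a2 + a3*u)*((a1 + a2*u + a3*u^2)^2 + (a1 + a2*u + a3*u^2)*a1 + a1^2)/6\<bar> \<le> A^2 + A^3"
          unfolding A_def using H_bound[of u a2 a1 a3] u by simp
        ultimately show ?thesis using u by (simp add: abs_mult mult.commute mult_left_mono)
      qed
      have "exp s - (1 + a1*u + (a2 + a1^2/2)*u^2 + (a3 + a1*a2 + a1^3/6)*u^3)
          = (exp s - T s) + (T s - T q) + (T q - (1 + a1*u + (a2 + a1^2/2)*u^2 + (a3 + a1*a2 + a1^3/6)*u^3))" by simp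
      then have "\<bar>exp s - (1 + a1*u + (a2 + a1^2/2)*u^2 + (a3 + a1*a2 + a1^3/6)*u^3)\<bar> \<le> K * u^4"
        using E1 E2 E3 abs3[of "exp s - T s" "T s - T q" "T q - (1 + a1*u + (a2 + a1^2/2)*u^2 + (a3 + a1*a2 + a1^3/6)*u^3)"]
        unfolding K_def by (simp add: algebra_simps)
      then show ?case unfolding P rat nu s_def by simp
    qed
  qed
qed


end
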